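(* For every $d\ge1$, $H_d\le d!$.
   Context: A sublattice $\Lambda'$ of a $d$-dimensional lattice $\Lambda$ is hollow if it is generated by $d$ linearly independent elements $v_1,\dots,v_d\in\Lambda$ such that the interior of the convex hull of $\pm v_1,\dots,\pm v_d$ contains no nonzero element of $\Lambda$. $H_d$ denotes the maximal index $[\Lambda:\Lambda']$ of a hollow sublattice $\Lambda'$ of a $d$-dimensional lattice $\Lambda$. *)

theory Defs
  imports "HOL-Analysis.Analysis"
begin

definition int_span :: "('n::finite \<Rightarrow> real^'n) \<Rightarrow> (real^'n) set" where
  "int_span v = range (\<lambda>z::'n \<Rightarrow> int. \<Sum>i\<in>UNIV. of_int (z i) *\<^sub>R v i)"

definition lin_indep_family :: "('n::finite \<Rightarrow> real^'n) \<Rightarrow> bool" where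
  "lin_indep_family v \<longleftrightarrow> inj v \<and> independent (range v)"

definition is_lattice :: "(real^'n::finite) set \<Rightarrow> bool" where
  "is_lattice L \<longleftrightarrow> (\<exists>b. lin_indep_family b \<and> L = int_span b)"

definition hollow_sublattice :: "(real^'n::finite) set \<Rightarrow> (real^'n) set \<Rightarrow> bool" where
  "hollow_sublattice L L' \<longleftrightarrow>
     (\<exists>v. lin_indep_family v \<and> range v \<subseteq> L \<and> L' = int_span v \<and>
          (\<forall>x\<in>L. x \<in> interior (convex hull (range v \<union> range (\<lambda>i. - v i))) \<longrightarrow> x = 0))"

definition lattice_index :: "(real^'n::finite) set \<Rightarrow> (real^'n) set \<Rightarrow> nat" where
  "lattice_index L L' = card {(\<lambda>y. x + y) ` L' | x. x \<in> L}"

end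

theory Submission imports Defs "HOL-Real_Asymp.Real_Asymp" begin

lemma reflect_measure:
  fixes s :: "'n::finite \<Rightarrow> real"
  assumes s: "\<And>i. s i = 1 \<or> s i = -1" and X: "X \<in> sets lebesgue"
  shows "emeasure lebesgue ((\<lambda>x::real^'n. \<chi> i. s i * x$i) -` X) = emeasure lebesgue X"
proof -
  define \<sigma> :: "real^'n" where "\<sigma> = (\<chi> i. s i)"
  define c where "c = (\<lambda>j::real^'n. j \<bullet> \<sigma>)"
  define T where "T = (\<lambda>x::real^'n. 0 + (\<Sum>j\<in>Basis. (c j * (x \<bullet> j)) *\<^sub>R j))"
  have cax: "c (axis k 1) = s k" for k
    by (simp add: c_def \<sigma>_def inner_axis')
  have c: "\<And>j. j \<in> Basis \<Longrightarrow> c j \<noteq> 0"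
    using s by (auto simp: Basis_vec_def cax) (metis neg_0_equal_iff_equal zero_neq_one)
  have cabs: "\<And>j. j \<in> Basis \<Longrightarrow> \<bar>c j\<bar> = 1"
    using s by (auto simp: Basis_vec_def cax) (metis abs_1 abs_minus_cancel)
  have Teq: "T = (\<lambda>x::real^'n. \<chi> i. s i * x$i)"
  proof
    fix x :: "real^'n"
    have "(\<chi> i. s i * x$i) = (\<Sum>j\<in>Basis. ((\<chi> i. s i * x$i) \<bullet> j) *\<^sub>R j)"
      by (simp add: euclidean_representation)
    also have "\<dots> = (\<Sum>j\<in>Basis. (c j * (x \<bullet> j)) *\<^sub>R j)"
      by (intro sum.cong refl) (auto simp: Basis_vec_def cax cart_eq_inner_axis[symmetric])
    finally show "T x = (\<chi> i. s i * x$i)" by (simp add: T_def)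
  qed
  have L: "lebesgue = density (distr lebesgue lebesgue T) (\<lambda>_. (\<Prod>j\<in>Basis. \<bar>c j\<bar>))"
    and M: "T \<in> lebesgue \<rightarrow>\<^sub>M lebesgue"
    using lebesgue_affine_euclidean[of c 0, OF c] lebesgue_affine_measurable[of c 0, OF c]
    by (simp_all add: T_def)
  have P: "(\<Prod>j\<in>Basis. \<bar>c j\<bar>) = 1" using cabs by (simp add: prod.neutral)
  have "emeasure lebesgue X = emeasure (distr lebesgue lebesgue T) X"
    by (subst L) (simp add: P density_1)
  also have "\<dots> = emeasure lebesgue (T -` X)"
    using X M by (simp add: emeasure_distr)
  finally show ?thesis by (simp add: Teq)
qed

lemma sum_Basis_cart: "(\<Sum>j\<in>(Basis::(real^'n::finite) set). f j) = (\<Sum>i\<in>UNIV. f (axis i (1::real)))"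
proof -
  have B: "(Basis::(real^'n) set) = range (\<lambda>i. axis i 1)"
    by (auto simp: Basis_vec_def)
  have "inj (\<lambda>i::'n. axis i (1::real))" by (auto simp: inj_on_def axis_eq_axis)
  then show ?thesis unfolding B by (simp add: sum.reindex)
qed

lemma piece_measure:
  fixes \<epsilon> m :: real
  assumes e: "0 < \<epsilon>" and m: "m = 1/2 - (real CARD('n) + 1) * \<epsilon>" "0 < m"
  defines "P \<equiv> {y::real^'n::finite. (\<forall>i. \<epsilon> \<le> y$i) \<and> (\<Sum>i\<in>UNIV. y$i) \<le> 1/2 - \<epsilon>}"
  shows "P \<in> lmeasurable" "m ^ CARD('n) / fact CARD('n) \<le> measure lebesgue P"
proof -
  have cl: "closed P" unfolding P_def
    by (intro closed_Collect_conj closed_Collect_all closed_Collect_le) (auto intro!: continuous_intros)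
  have bd: "P \<subseteq> cbox 0 (\<chi> i. 1)"
  proof
    fix y assume y: "y \<in> P"
    have "y$i \<le> 1" for i
    proof -
      have "y$i \<le> (\<Sum>j\<in>UNIV. y$j)"
        using y e by (intro member_le_sum) (auto simp: P_def intro: order_trans[of 0 \<epsilon>])
      also have "\<dots> \<le> 1" using y e by (simp add: P_def)
      finally show ?thesis .
    qed
    with y e show "y \<in> cbox 0 (\<chi> i. 1)"
      by (auto simp: P_def mem_box_cart intro: order_trans[of 0 \<epsilon>] less_imp_le)
  qed
  show Pm: "P \<in> lmeasurable"
    using cl bd by (intro bounded_set_imp_lmeasurable) (auto intro: bounded_subset[OF bounded_cbox] borel_closed)
  define S0 where "S0 = convex hull (insert 0 (Basis::(real^'n) set))"
  define \<delta> :: "real^'n" where "\<delta> = (\<chi> i. \<epsilon>)"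
  have cS0: "compact S0" unfolding S0_def by (intro finite_imp_compact_convex_hull) auto
  have S0m: "measure lebesgue S0 = 1 / fact CARD('n)"
  proof -
    have "measure lebesgue S0 = measure lborel S0"
      using cS0 by (intro measure_completion) (auto dest: compact_imp_closed)
    then show ?thesis unfolding S0_def using content_std_simplex[where 'a="real^'n"] by simp
  qed
  have sub: "(\<lambda>x. m *\<^sub>R x + \<delta>) ` S0 \<subseteq> P"
  proof
    fix y assume "y \<in> (\<lambda>x. m *\<^sub>R x + \<delta>) ` S0"
    then obtain x where x: "x \<in> S0" and y: "y = m *\<^sub>R x + \<delta>" by auto
    have x0: "\<forall>i. 0 \<le> x$i" and x1: "(\<Sum>i\<in>UNIV. x$i) \<le> 1"
      using x unfolding S0_def std_simplex sum_Basis_cart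
      by (auto simp: Basis_vec_def cart_eq_inner_axis)
    have "\<epsilon> \<le> y$i" for i using x0 m by (simp add: y \<delta>_def)
    moreover have "(\<Sum>i\<in>UNIV. y$i) = m * (\<Sum>i\<in>UNIV. x$i) + real CARD('n) * \<epsilon>"
      by (simp add: y \<delta>_def sum.distrib sum_distrib_left)
    moreover have "m * (\<Sum>i\<in>UNIV. x$i) \<le> m" using x1 m by (simp add: mult_left_le)
    ultimately show "y \<in> P" using m by (auto simp: P_def algebra_simps)
  qed
  have "measure lebesgue ((\<lambda>x. m *\<^sub>R x + \<delta>) ` S0) = m ^ CARD('n) / fact CARD('n)"
    using measure_lebesgue_affine[of m \<delta> S0] m by (simp add: S0m)
  moreover have "(\<lambda>x. m *\<^sub>R x + \<delta>) ` S0 \<in> sets lebesgue"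
    using cS0 by (intro fmeasurableD lmeasurable_compact compact_continuous_image continuous_intros)
  ultimately show "m ^ CARD('n) / fact CARD('n) \<le> measure lebesgue P"
    using measure_mono_fmeasurable[OF sub _ Pm] by simp
qed

lemma D_lmeasurable: "{y::real^'n::finite. (\<Sum>i\<in>UNIV. \<bar>y$i\<bar>) < r} \<in> lmeasurable"
proof -
  have op: "open {y::real^'n. (\<Sum>i\<in>UNIV. \<bar>y$i\<bar>) < r}"
    by (intro open_Collect_less) (auto intro!: continuous_intros)
  have "{y::real^'n. (\<Sum>i\<in>UNIV. \<bar>y$i\<bar>) < r} \<subseteq> cball 0 \<bar>r\<bar>"
  proof
    fix y :: "real^'n" assume "y \<in> {y::real^'n. (\<Sum>i\<in>UNIV. \<bar>y$i\<bar>) < r}"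
    then have "norm y < r" using norm_le_l1_cart[of y] by simp
    then show "y \<in> cball 0 \<bar>r\<bar>" by (simp add: dist_norm)
  qed
  then show ?thesis using op
    by (intro bounded_set_imp_lmeasurable) (auto intro: bounded_subset[OF bounded_cball] borel_open)
qed

lemma measure_D_approx:
  fixes k :: nat
  shows "((real k + 1) / (real k + 2)) ^ CARD('n) / fact CARD('n)
          \<le> measure lebesgue {y::real^'n::finite. (\<Sum>i\<in>UNIV. \<bar>y$i\<bar>) < 1/2}"
proof -
  define d where "d = real CARD('n)"
  define \<epsilon> where "\<epsilon> = 1 / (2 * (d + 1) * (real k + 2))"
  define m where "m = 1/2 - (d + 1) * \<epsilon>"
  have dpos: "0 < d" by (simp add: d_def)
  have e: "0 < \<epsilon>" using dpos by (simp add: \<epsilon>_def)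
  have meq: "m = (real k + 1) / (2 * (real k + 2))"
  proof -
    have "(d + 1) * \<epsilon> = 1 / (2 * (real k + 2))"
    proof -
      have p: "0 < d + 1" "0 < real k + 2" using dpos by linarith+
      have "(d + 1) * \<epsilon> = (d + 1) / ((d + 1) * (2 * (real k + 2)))"
        unfolding \<epsilon>_def times_divide_eq_right mult_1_right by (simp only: mult_ac)
      also have "\<dots> = 1 / (2 * (real k + 2))"
        using p by (subst nonzero_divide_mult_cancel_left) auto
      finally show ?thesis .
    qed
    then show ?thesis by (simp add: m_def field_simps)
  qed
  have m: "0 < m" by (simp add: meq)
  define P where "P = {y::real^'n. (\<forall>i. \<epsilon> \<le> y$i) \<and> (\<Sum>i\<in>UNIV. y$i) \<le> 1/2 - \<epsilon>}"
  have Pm: "P \<in> lmeasurable" and Pmeas: "m ^ CARD('n) / fact CARD('n) \<le> measure lebesgue P"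
    using piece_measure[OF e m_def[unfolded d_def] m] by (simp_all add: P_def)
  define R where "R = (\<lambda>(s::'n \<Rightarrow> real) (x::real^'n). \<chi> i. s i * x$i)"
  define SS where "SS = PiE (UNIV::'n set) (\<lambda>_. {1::real, -1})"
  define D where "D = {y::real^'n::finite. (\<Sum>i\<in>UNIV. \<bar>y$i\<bar>) < 1/2}"
  have SSfin: "finite SS" unfolding SS_def by (intro finite_PiE) auto
  have SScard: "card SS = 2 ^ CARD('n)" unfolding SS_def by (simp add: card_PiE numeral_2_eq_2)
  have sgn: "s i = 1 \<or> s i = -1" if "s \<in> SS" for s i using that by (auto simp: SS_def)
  have em: "emeasure lebesgue (R s -` P) = emeasure lebesgue P" if "s \<in> SS" for s
    unfolding R_def using reflect_measure[of s P] sgn[OF that] Pm by auto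
  have Rsets: "R s -` P \<in> sets lebesgue" if "s \<in> SS" for s
  proof -
    have "closed P" unfolding P_def
      by (intro closed_Collect_conj closed_Collect_all closed_Collect_le) (auto intro!: continuous_intros)
    moreover have "continuous_on UNIV (R s)" unfolding R_def by (auto intro!: continuous_intros)
    ultimately have "closed (R s -` P)"
      using closed_vimage by blast
    then show ?thesis by (auto intro: borel_closed)
  qed
  have mm: "measure lebesgue (R s -` P) = measure lebesgue P" if "s \<in> SS" for s
    using em[OF that] by (simp add: measure_def)
  have fin: "emeasure lebesgue (R s -` P) \<noteq> \<infinity>" if "s \<in> SS" for s
    using em[OF that] Pm by (auto simp: fmeasurable_def)
  have disj: "disjoint_family_on (\<lambda>s. R s -` P) SS"
  unfolding disjoint_family_on_def
  proof (intro ballI impI)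
    fix s t assume st: "s \<in> SS" "t \<in> SS" "s \<noteq> t"
    then obtain i where i: "s i \<noteq> t i" by (auto simp: SS_def PiE_def extensional_def fun_eq_iff)
    then have ti: "t i = - s i" using sgn[OF st(1), of i] sgn[OF st(2), of i] by auto
    show "R s -` P \<inter> R t -` P = {}"
    proof (rule ccontr)
      assume "R s -` P \<inter> R t -` P \<noteq> {}"
      then obtain y where "R s y \<in> P" "R t y \<in> P" by auto
      then have "\<epsilon> \<le> s i * y$i" "\<epsilon> \<le> t i * y$i" by (auto simp: P_def R_def)
      then show False using ti e by simp
    qed
  qed
  have subD: "(\<Union>s\<in>SS. R s -` P) \<subseteq> D"
  proof clarify
    fix s y assume s: "s \<in> SS" and y: "R s y \<in> P"
    have ge: "\<epsilon> \<le> s i * y$i" for i using y by (auto simp: P_def R_def)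
    have ab: "\<bar>y$i\<bar> = s i * y$i" for i
    proof -
      have "\<bar>y$i\<bar> = \<bar>s i * y$i\<bar>" using sgn[OF s, of i] by (auto simp: abs_mult)
      also have "\<dots> = s i * y$i" using ge[of i] e by simp
      finally show ?thesis .
    qed
    have "(\<Sum>i\<in>UNIV. \<bar>y$i\<bar>) = (\<Sum>i\<in>UNIV. R s y $ i)" by (simp add: ab R_def)
    also have "\<dots> \<le> 1/2 - \<epsilon>" using y by (simp add: P_def)
    finally show "y \<in> D" using e by (simp add: D_def)
  qed
  have "measure lebesgue (\<Union>s\<in>SS. R s -` P) = (\<Sum>s\<in>SS. measure lebesgue (R s -` P))"
    using SSfin Rsets disj fin by (intro measure_finite_Union) auto
  also have "\<dots> = 2 ^ CARD('n) * measure lebesgue P" using mm SScard by simp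
  finally have U: "measure lebesgue (\<Union>s\<in>SS. R s -` P) = 2 ^ CARD('n) * measure lebesgue P" .
  have "measure lebesgue (\<Union>s\<in>SS. R s -` P) \<le> measure lebesgue D"
    using subD Rsets SSfin D_lmeasurable[of "1/2"] unfolding D_def
    by (intro measure_mono_fmeasurable) auto
  then have "2 ^ CARD('n) * measure lebesgue P \<le> measure lebesgue D" using U by simp
  moreover have "2 ^ CARD('n) * (m ^ CARD('n) / fact CARD('n)) \<le> 2 ^ CARD('n) * measure lebesgue P"
    using Pmeas by (intro mult_left_mono) auto
  moreover have "2 ^ CARD('n) * (m ^ CARD('n) / fact CARD('n)) = ((real k + 1) / (real k + 2)) ^ CARD('n) / fact CARD('n)"
  proof -
    have "2 * m = (real k + 1) / (real k + 2)" unfolding meq by (simp add: divide_simps algebra_simps)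
    moreover have "2 ^ CARD('n) * (m ^ CARD('n) / fact CARD('n)) = (2 * m) ^ CARD('n) / fact CARD('n)"
      by (simp add: power_mult_distrib)
    ultimately show ?thesis by simp
  qed
  ultimately show ?thesis by (simp add: D_def)
qed

lemma measure_D: "1 / fact CARD('n) \<le> measure lebesgue {y::real^'n::finite. (\<Sum>i\<in>UNIV. \<bar>y$i\<bar>) < 1/2}"
proof (rule LIMSEQ_le_const2)
  have lim: "(\<lambda>k. (real k + 1) / (real k + 2)) \<longlonglongrightarrow> 1" by real_asymp
  then show "(\<lambda>k. ((real k + 1) / (real k + 2)) ^ CARD('n) / fact CARD('n)) \<longlonglongrightarrow> 1 / fact CARD('n)"
    using tendsto_divide[OF tendsto_power[OF lim, of "CARD('n)"] tendsto_const[of "fact CARD('n)"]] by simp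
  show "\<exists>N. \<forall>n\<ge>N. ((real n + 1) / (real n + 2)) ^ CARD('n) / fact CARD('n)
        \<le> measure lebesgue {y::real^'n::finite. (\<Sum>i\<in>UNIV. \<bar>y$i\<bar>) < 1/2}"
    using measure_D_approx by blast
qed

lemma packing:
  fixes A :: "(real^'n::finite) set"
  assumes finA: "finite A"
    and sep: "\<And>a b n. a \<in> A \<Longrightarrow> b \<in> A \<Longrightarrow> a \<noteq> b \<Longrightarrow> 1 \<le> (\<Sum>i\<in>UNIV. \<bar>a$i - b$i + of_int (n i)\<bar>)"
  shows "real (card A) \<le> fact CARD('n)"
proof -
  define D where "D = {y::real^'n::finite. (\<Sum>i\<in>UNIV. \<bar>y$i\<bar>) < 1/2}"
  define \<mu> where "\<mu> = measure lebesgue D"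
  have Dm: "D \<in> lmeasurable" unfolding D_def by (rule D_lmeasurable)
  have \<mu>ge: "1 / fact CARD('n) \<le> \<mu>" unfolding \<mu>_def D_def by (rule measure_D)
  obtain B where B: "\<And>a i. a \<in> A \<Longrightarrow> \<bar>a$i\<bar> \<le> B" and B0: "0 \<le> B"
  proof -
    obtain C where C: "\<And>a. a \<in> A \<Longrightarrow> norm a \<le> C"
      using finite_imp_bounded[OF finA] by (auto simp: bounded_iff)
    show ?thesis
      by (rule that[of "max C 0"]) (auto intro: order_trans[OF component_le_norm_cart C] simp: le_max_iff_disj)
  qed
  define iv :: "('n \<Rightarrow> int) \<Rightarrow> real^'n" where "iv n = (\<chi> i. of_int (n i))" for n
  have key: "real (card A) * \<mu> \<le> ((2*B + 2*real K + 2) / (2*real K + 1)) ^ CARD('n)" for K :: nat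
  proof -
    define N where "N = PiE (UNIV::'n set) (\<lambda>_. {- int K..int K})"
    define I where "I = A \<times> N"
    define F where "F = (\<lambda>(a, n). (+) (a + iv n) ` D)"
    define R where "R = B + real K + 1"
    define Q where "Q = cbox (\<chi> i::'n. - R) (\<chi> i. R)"
    have finN: "finite N" unfolding N_def by (intro finite_PiE) auto
    have cardN: "card N = (2 * K + 1) ^ CARD('n)" unfolding N_def by (simp add: card_PiE nat_add_distrib nat_mult_distrib)
    have finI: "finite I" using finA finN by (simp add: I_def)
    have cardI: "card I = card A * (2 * K + 1) ^ CARD('n)" by (simp add: I_def card_cartesian_product cardN)
    have Fm: "F p \<in> lmeasurable" for p
      using Dm by (auto simp: F_def split: prod.splits intro: measurable_translation)
    have Fmeas: "measure lebesgue (F p) = \<mu>" for p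
      by (auto simp: F_def \<mu>_def measure_translation split: prod.splits)
    have disj: "disjoint_family_on F I"
      unfolding disjoint_family_on_def
    proof (intro ballI impI)
      fix p q assume pq: "p \<in> I" "q \<in> I" "p \<noteq> q"
      obtain a n where p: "p = (a, n)" by (cases p)
      obtain b m where q: "q = (b, m)" by (cases q)
      show "F p \<inter> F q = {}"
      proof (rule ccontr)
        assume "F p \<inter> F q \<noteq> {}"
        then obtain y y' where y: "y \<in> D" "y' \<in> D" and eq: "a + iv n + y = b + iv m + y'"
          by (auto simp: F_def p q)
        have comp: "a$i - b$i + of_int (n i - m i) = y'$i - y$i" for i
          using arg_cong[OF eq, of "\<lambda>v. v$i"] by (simp add: iv_def)
        have lt: "(\<Sum>i\<in>UNIV. \<bar>a$i - b$i + of_int (n i - m i)\<bar>) < 1"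
        proof -
          have "(\<Sum>i\<in>UNIV. \<bar>a$i - b$i + of_int (n i - m i)\<bar>) \<le> (\<Sum>i\<in>UNIV. \<bar>y'$i\<bar> + \<bar>y$i\<bar>)"
            unfolding comp by (intro sum_mono) auto
          also have "\<dots> < 1" using y by (simp add: D_def sum.distrib)
          finally show ?thesis .
        qed
        show False
        proof (cases "a = b")
          case False
          then show False using sep[of a b "\<lambda>i. n i - m i"] pq lt by (auto simp: I_def p q)
        next
          case True
          then have "n \<noteq> m" using pq by (simp add: p q)
          then obtain j where j: "n j \<noteq> m j" by auto
          have "1 \<le> \<bar>of_int (n j - m j) :: real\<bar>" using j by linarith
          also have "\<dots> \<le> (\<Sum>i\<in>UNIV. \<bar>a$i - b$i + of_int (n i - m i)\<bar>)"
            using True member_le_sum[of j UNIV "\<lambda>i. \<bar>a$i - b$i + of_int (n i - m i)\<bar>"] by simp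
          finally show False using lt by simp
        qed
      qed
    qed
    have subQ: "(\<Union>p\<in>I. F p) \<subseteq> Q"
    proof clarify
      fix a n z assume an: "(a, n) \<in> I" and z: "z \<in> F (a, n)"
      then obtain y where y: "y \<in> D" and zy: "z = a + iv n + y" by (auto simp: F_def)
      have "\<bar>z$i\<bar> \<le> R" for i
      proof -
        have "\<bar>y$i\<bar> \<le> (\<Sum>j\<in>UNIV. \<bar>y$j\<bar>)" by (intro member_le_sum) auto
        then have yi: "\<bar>y$i\<bar> \<le> 1" using y by (simp add: D_def)
        have "\<bar>n i\<bar> \<le> int K" using an by (auto simp: I_def N_def PiE_def Pi_def abs_le_iff) (metis minus_le_iff)
        then have ni: "\<bar>of_int (n i) :: real\<bar> \<le> real K" by linarith
        have ai: "\<bar>a$i\<bar> \<le> B" using an B by (auto simp: I_def)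
        have "\<bar>z$i\<bar> \<le> \<bar>a$i\<bar> + \<bar>of_int (n i)\<bar> + \<bar>y$i\<bar>" by (simp add: zy iv_def)
        then show ?thesis using yi ni ai by (simp add: R_def)
      qed
      then show "z \<in> Q" unfolding Q_def mem_box_cart by (auto simp: abs_le_iff) (metis minus_le_iff)
    qed
    have R0: "0 \<le> R" using B0 by (simp add: R_def)
    have Qm: "measure lebesgue Q = (2 * R) ^ CARD('n)"
    proof -
      have "cbox (\<chi> i::'n. - R) (\<chi> i. R) \<noteq> {}" proof -
        have "(\<chi> i::'n. - R) \<in> cbox (\<chi> i::'n. - R) (\<chi> i. R)" using R0 by (simp add: mem_box_cart)
        then show ?thesis by blast
      qed
      then show ?thesis by (simp add: Q_def content_cbox_cart)
    qed
    have "measure lebesgue (\<Union>p\<in>I. F p) = (\<Sum>p\<in>I. measure lebesgue (F p))"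
      using finI disj Fm fmeasurableD2[OF Fm] by (intro measure_finite_Union) (auto simp del: emeasure_completion)
    also have "\<dots> = real (card A) * (2 * real K + 1) ^ CARD('n) * \<mu>" by (simp add: Fmeas cardI add.commute)
    finally have U: "measure lebesgue (\<Union>p\<in>I. F p) = real (card A) * (2 * real K + 1) ^ CARD('n) * \<mu>" .
    have "measure lebesgue (\<Union>p\<in>I. F p) \<le> measure lebesgue Q"
      using subQ finI Fm by (intro measure_mono_fmeasurable) (auto simp: Q_def)
    then have "real (card A) * (2 * real K + 1) ^ CARD('n) * \<mu> \<le> (2 * R) ^ CARD('n)"
      using U Qm by simp
    moreover have "(0::real) < (2 * real K + 1) ^ CARD('n)" by simp
    ultimately have "real (card A) * \<mu> \<le> (2 * R) ^ CARD('n) / (2 * real K + 1) ^ CARD('n)"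
      by (simp add: field_simps)
    also have "\<dots> = ((2*B + 2*real K + 2) / (2*real K + 1)) ^ CARD('n)"
      by (simp add: R_def power_divide algebra_simps)
    finally show ?thesis .
  qed
  have le1: "real (card A) * \<mu> \<le> 1"
  proof (rule LIMSEQ_le_const)
    have lim: "(\<lambda>K. (2*B + 2*real K + 2) / (2*real K + 1)) \<longlonglongrightarrow> 1" by real_asymp
    show "(\<lambda>K. ((2*B + 2*real K + 2) / (2*real K + 1)) ^ CARD('n)) \<longlonglongrightarrow> 1"
      using tendsto_power[OF lim, of "CARD('n)"] by simp
    show "\<exists>N. \<forall>n\<ge>N. real (card A) * \<mu> \<le> ((2*B + 2*real n + 2) / (2*real n + 1)) ^ CARD('n)"
      using key by blast
  qed
  have "real (card A) / fact CARD('n) \<le> real (card A) * \<mu>"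
    using mult_left_mono[OF \<mu>ge, of "real (card A)"] by simp
  then have "real (card A) / fact CARD('n) \<le> 1" using le1 by linarith
  then show ?thesis by (simp add: divide_le_eq)
qed

lemma int_span_diff:
  assumes "x \<in> int_span b" "y \<in> int_span b" shows "x - y \<in> int_span b"
proof -
  obtain z w where x: "x = (\<Sum>i\<in>UNIV. of_int (z i) *\<^sub>R b i)" and y: "y = (\<Sum>i\<in>UNIV. of_int (w i) *\<^sub>R b i)"
    using assms by (auto simp: int_span_def)
  have "x - y = (\<Sum>i\<in>UNIV. of_int (z i - w i) *\<^sub>R b i)"
    by (simp add: x y sum_subtractf[symmetric] scaleR_diff_left)
  then show ?thesis unfolding int_span_def by (rule range_eqI[where x="\<lambda>i. z i - w i"])
qed

lemma int_span_add:
  assumes "x \<in> int_span b" "y \<in> int_span b" shows "x + y \<in> int_span b"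
proof -
  obtain z w where x: "x = (\<Sum>i\<in>UNIV. of_int (z i) *\<^sub>R b i)" and y: "y = (\<Sum>i\<in>UNIV. of_int (w i) *\<^sub>R b i)"
    using assms by (auto simp: int_span_def)
  have "x + y = (\<Sum>i\<in>UNIV. of_int (z i + w i) *\<^sub>R b i)"
    by (simp add: x y sum.distrib[symmetric] scaleR_add_left)
  then show ?thesis unfolding int_span_def by (rule range_eqI[where x="\<lambda>i. z i + w i"])
qed

lemma int_span_zero: "0 \<in> int_span b"
proof -
  have "(0::real^_) = (\<Sum>i\<in>UNIV. of_int ((\<lambda>_. 0::int) i) *\<^sub>R b i)" by simp
  then show ?thesis unfolding int_span_def by (rule range_eqI[where x="\<lambda>_. 0::int"])
qed

lemma int_span_smult:
  assumes "x \<in> int_span b" shows "of_int k *\<^sub>R x \<in> int_span b"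
proof -
  obtain z where x: "x = (\<Sum>i\<in>UNIV. of_int (z i) *\<^sub>R b i)"
    using assms by (auto simp: int_span_def)
  have "of_int k *\<^sub>R x = (\<Sum>i\<in>UNIV. of_int (k * z i) *\<^sub>R b i)"
    by (simp add: x scaleR_sum_right)
  then show ?thesis unfolding int_span_def by (rule range_eqI[where x="\<lambda>i. k * z i"])
qed

lemma int_span_sum:
  assumes "\<And>i. v i \<in> int_span b"
  shows "(\<Sum>i\<in>S. of_int (z i) *\<^sub>R v i) \<in> int_span b"
proof (cases "finite S")
  case True then show ?thesis
    by (induction S rule: finite_induct) (auto intro: int_span_zero int_span_add int_span_smult assms)
qed (simp add: int_span_zero)

lemma int_span_mem: "(\<Sum>i\<in>UNIV. of_int (z i) *\<^sub>R v i) \<in> int_span v"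
  by (auto simp: int_span_def)

lemma main_bound:
  fixes L L' :: "(real^'n::finite) set"
  assumes "is_lattice L"
    and "hollow_sublattice L L'"
  shows "lattice_index L L' \<le> fact CARD('n)"
proof -
  obtain bb where bb: "L = int_span bb" using assms(1) by (auto simp: is_lattice_def)
  obtain v where v: "lin_indep_family v" "range v \<subseteq> L" "L' = int_span v"
    and hol: "\<And>x. x \<in> L \<Longrightarrow> x \<in> interior (convex hull (range v \<union> range (\<lambda>i. - v i))) \<Longrightarrow> x = 0"
    using assms(2) unfolding hollow_sublattice_def by blast
  have injv: "inj v" and indv: "independent (range v)" using v(1) by (auto simp: lin_indep_family_def)
  define V :: "real^'n \<Rightarrow> real^'n" where "V c = (\<Sum>i\<in>UNIV. c$i *\<^sub>R v i)" for c
  have linV: "linear V" unfolding V_def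
    by (intro linearI) (auto simp: sum.distrib scaleR_add_left scaleR_sum_right)
  have injV: "inj V"
  proof -
    have "c = 0" if "V c = 0" for c
    proof (rule ccontr)
      assume "c \<noteq> 0"
      then obtain j where j: "c$j \<noteq> 0" by (auto simp: vec_eq_iff)
      define u where "u = (\<lambda>w. c $ (inv v w))"
      have "(\<Sum>w\<in>range v. u w *\<^sub>R w) = (\<Sum>i\<in>UNIV. u (v i) *\<^sub>R v i)"
        using injv by (simp add: sum.reindex)
      also have "\<dots> = V c" using injv by (simp add: u_def V_def)
      finally have "(\<Sum>w\<in>range v. u w *\<^sub>R w) = 0" using that by simp
      moreover have "u (v j) \<noteq> 0" using injv j by (simp add: u_def)
      ultimately have "dependent (range v)"
        by (subst dependent_finite) auto
      then show False using indv by simp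
    qed
    then show ?thesis using linV by (simp add: linear_injective_0)
  qed
  have surjV: "surj V" using linV injV by (simp add: linear_injective_imp_surjective)
  define co where "co x = (SOME c. V c = x)" for x
  have Vco: "V (co x) = x" for x unfolding co_def by (rule someI_ex) (use surjV in \<open>metis surjD\<close>)
  have coV: "co (V c) = c" for c using Vco injV by (meson injD)
  have Lsub: "x \<in> L' \<Longrightarrow> x \<in> L" for x
  proof -
    assume "x \<in> L'"
    then obtain z where "x = (\<Sum>i\<in>UNIV. of_int (z i) *\<^sub>R v i)" using v(3) by (auto simp: int_span_def)
    moreover have "v i \<in> int_span bb" for i using v(2) bb by auto
    ultimately show "x \<in> L" using int_span_sum[of v bb z UNIV] bb by simp
  qed
  have hol2: "x = 0" if x: "x \<in> L" and s: "(\<Sum>i\<in>UNIV. \<bar>co x $ i\<bar>) < 1" for x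
  proof -
    define CH where "CH = convex hull (range v \<union> range (\<lambda>i. - v i))"
    define U where "U = V ` {c. (\<Sum>i\<in>UNIV. \<bar>c$i\<bar>) < 1}"
    have Uopen: "open U" unfolding U_def
      by (intro open_surjective_linear_image linV surjV open_Collect_less) (auto intro!: continuous_intros)
    have cvx: "convex CH" unfolding CH_def by simp
    have pm: "v i \<in> CH" "- v i \<in> CH" for i unfolding CH_def by (auto intro: hull_inc)
    have z: "0 \<in> CH"
    proof -
      obtain i :: 'n where True by simp
      have "(1/2) *\<^sub>R v i + (1/2) *\<^sub>R (- v i) \<in> CH"
        using cvx pm[of i] by (intro convexD) auto
      then show ?thesis by simp
    qed
    have "U \<subseteq> CH"
    proof
      fix y assume "y \<in> U"
      then obtain c where c: "(\<Sum>i\<in>UNIV. \<bar>c$i\<bar>) < 1" and y: "y = V c" by (auto simp: U_def)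
      define t where "t = (\<Sum>i\<in>UNIV. \<bar>c$i\<bar>)"
      define w where "w i = (if 0 \<le> c$i then v i else - v i)" for i
      have wC: "w i \<in> CH" for i using pm by (simp add: w_def)
      have cw: "c$i *\<^sub>R v i = \<bar>c$i\<bar> *\<^sub>R w i" for i by (simp add: w_def)
      show "y \<in> CH"
      proof (cases "t = 0")
        case True
        then have "\<forall>i. c$i = 0" unfolding t_def by (simp add: sum_nonneg_eq_0_iff)
        then have "y = 0" by (simp add: y V_def)
        then show ?thesis using z by simp
      next
        case False
        then have tpos: "0 < t" unfolding t_def by (metis sum_abs_ge_zero order_le_less)
        have inner: "(\<Sum>i\<in>UNIV. (\<bar>c$i\<bar> / t) *\<^sub>R w i) \<in> CH"
        proof (rule convex_sum[OF _ cvx])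
          show "(\<Sum>i\<in>UNIV. \<bar>c$i\<bar> / t) = 1" using tpos by (simp add: sum_divide_distrib[symmetric] t_def)
        qed (use tpos in \<open>auto simp: wC\<close>)
        have "y = t *\<^sub>R (\<Sum>i\<in>UNIV. (\<bar>c$i\<bar> / t) *\<^sub>R w i) + (1 - t) *\<^sub>R 0"
          using tpos by (simp add: y V_def cw scaleR_sum_right)
        also have "\<dots> \<in> CH" using inner z tpos c cvx by (intro convexD) (auto simp: t_def)
        finally show ?thesis .
      qed
    qed
    then have "U \<subseteq> interior CH" using Uopen by (rule interior_maximal)
    moreover have "x \<in> U" unfolding U_def using s Vco[of x] by force
    ultimately show ?thesis using hol[OF x] by (auto simp: CH_def)
  qed
  define CS where "CS = {(\<lambda>y. x + y) ` L' | x. x \<in> L}"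
  show ?thesis
  proof (cases "finite CS")
    case False
    then show ?thesis by (simp add: lattice_index_def CS_def)
  next
    case True
    define r where "r C = (SOME x. x \<in> L \<and> C = (\<lambda>y. x + y) ` L')" for C
    have r: "r C \<in> L" "C = (\<lambda>y. r C + y) ` L'" if "C \<in> CS" for C
    proof -
      have "\<exists>x. x \<in> L \<and> C = (\<lambda>y. x + y) ` L'" using that by (auto simp: CS_def)
      then have "r C \<in> L \<and> C = (\<lambda>y. r C + y) ` L'" unfolding r_def by (rule someI_ex)
      then show "r C \<in> L" "C = (\<lambda>y. r C + y) ` L'" by auto
    qed
    define A where "A = (\<lambda>C. co (r C)) ` CS"
    have inj: "inj_on (\<lambda>C. co (r C)) CS"
    proof (rule inj_onI)
      fix C C' assume "C \<in> CS" "C' \<in> CS" "co (r C) = co (r C')"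
      then show "C = C'" using r Vco by metis
    qed
    have cardA: "card A = card CS" unfolding A_def using inj by (simp add: card_image)
    have "real (card A) \<le> fact CARD('n)"
    proof (rule packing)
      show "finite A" using True by (simp add: A_def)
      fix a b :: "real^'n" and n :: "'n \<Rightarrow> int"
      assume a: "a \<in> A" and b: "b \<in> A" and ab: "a \<noteq> b"
      obtain C where C: "C \<in> CS" "a = co (r C)" using a by (auto simp: A_def)
      obtain C' where C': "C' \<in> CS" "b = co (r C')" using b by (auto simp: A_def)
      define iv :: "real^'n" where "iv = (\<chi> i. of_int (n i))"
      define x where "x = r C - r C' + V iv"
      have Viv: "V iv \<in> L'" using v(3) int_span_mem[of n v] by (simp add: V_def iv_def)
      have xL: "x \<in> L" unfolding x_def bb
        using r(1)[OF C(1)] r(1)[OF C'(1)] Lsub[OF Viv] bb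
        by (intro int_span_add int_span_diff) auto
      have cox: "co x = a - b + iv"
      proof -
        have "V (a - b + iv) = x" using linV C C' Vco
          by (simp add: x_def linear_add linear_diff)
        then show ?thesis using coV by metis
      qed
      show "1 \<le> (\<Sum>i\<in>UNIV. \<bar>a$i - b$i + of_int (n i)\<bar>)"
      proof (rule ccontr)
        assume "\<not> ?thesis"
        then have "(\<Sum>i\<in>UNIV. \<bar>co x $ i\<bar>) < 1" by (simp add: cox iv_def)
        then have "x = 0" using hol2 xL by blast
        then have eq: "r C' = r C + V iv" by (simp add: x_def algebra_simps)
        have "C' = C"
        proof -
          have "C' = (\<lambda>y. r C' + y) ` L'" using r(2)[OF C'(1)] .
          also have "\<dots> = (\<lambda>y. r C + y) ` L'"
          proof safe
            fix y assume "y \<in> L'"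
            then have "V iv + y \<in> L'" using Viv v(3) by (simp add: int_span_add)
            then show "r C' + y \<in> (\<lambda>y. r C + y) ` L'" unfolding eq
              by (intro image_eqI[of _ _ "V iv + y"]) (auto simp: algebra_simps)
          next
            fix y assume "y \<in> L'"
            then have "y - V iv \<in> L'" using Viv v(3) by (simp add: int_span_diff)
            then show "r C + y \<in> (\<lambda>y. r C' + y) ` L'" unfolding eq
              by (intro image_eqI[of _ _ "y - V iv"]) (auto simp: algebra_simps)
          qed
          also have "\<dots> = C" using r(2)[OF C(1)] by simp
          finally show ?thesis .
        qed
        then show False using ab C C' by simp
      qed
    qed
    then have "real (card CS) \<le> fact CARD('n)" using cardA by simp
    then have "card CS \<le> fact CARD('n)" by (metis of_nat_fact of_nat_le_iff)
    then show ?thesis by (simp add: lattice_index_def CS_def)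
  qed
qed

theorem proposition11p2:
  fixes L L' :: "(real^'n::finite) set"
  assumes "is_lattice L"
    and "hollow_sublattice L L'"
  shows "lattice_index L L' \<le> fact CARD('n)"
  using assms by (rule main_bound)

end
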